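(* Let $n\ge3$ and let $\rho:\mathsf{Ch}_n\to\mathcal M_N(\mathbb T)$ be a faithful representation. For $\ell\in\{1,\dots,n\}$ let $\rho_\ell:\mathsf{Ch}_{n+1}\to\mathcal M_N(\mathbb T)$ be the representation determined by $\rho_\ell(a_j)=\rho(a_j)$ for $j\le\ell$ and $\rho_\ell(a_j)=\rho(a_{j-1})$ for $j>\ell$. Then the representation $$\widetilde\rho=(\rho_1,\rho_2,\rho_n):\mathsf{Ch}_{n+1}\to(\mathcal M_N(\mathbb T))^3,\qquad x\mapsto(\rho_1(x),\rho_2(x),\rho_n(x)),$$ is faithful. Moreover, if the map $\mathbf k\mapsto\rho(\mathfrak C_{\mathbf k}(a_1,\dots,a_n))$ (defined on tuples $\mathbf k=(k_{ji})_{1\le i\le j\le n}$ of non-negative integers) is the restriction of an injective affine map, then the map $\widetilde{\mathbf k}\mapsto\widetilde\rho(\mathfrak C_{\widetilde{\mathbf k}}(a_1,\dots,a_{n+1}))$ (defined on tuples $\widetilde{\mathbf k}=(\widetilde k_{ji})_{1\le i\le j\le n+1}$ of non-negative integers) is also the restriction of an injective affine map.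
   Context: The Chinese monoid of rank $m$ is $\mathsf{Ch}_m=\langle a_1,\dots,a_m\rangle$ with relations $a_ja_ka_i=a_ka_ja_i=a_ka_ia_j$ for all $1\le i\le j\le k\le m$. $\mathbb T=\mathbb R\cup\{-\infty\}$ is the max-plus semiring, $\mathcal M_N(\mathbb T)$ the monoid of $N\times N$ matrices over it; a representation is a monoid homomorphism into $\mathcal M_N(\mathbb T)$ (or into a product of such), faithful if injective. For a tuple $\mathbf k=(k_{ji})_{1\le i\le j\le m}$ of non-negative integers, $\mathfrak C_{\mathbf k}(a_1,\dots,a_m)=b_1\cdots b_m$ with $b_j=(a_ja_1)^{k_{j1}}\cdots(a_ja_{j-1})^{k_{j(j-1)}}a_j^{k_{jj}}$; every element of $\mathsf{Ch}_m$ equals $\mathfrak C_{\mathbf k}(a_1,\dots,a_m)$ for a unique $\mathbf k$. "Restriction of an injective affine map" means that the matrix (tuple) entries, viewed as a real vector, are given by an injective affine function of the tuple $\mathbf k\in\mathbb R^{m(m+1)/2}$, restricted to non-negative integer tuples. *)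

theory Defs
  imports Complex_Main
begin

datatype trop = NegInf | Fin real

fun tplus :: "trop \<Rightarrow> trop \<Rightarrow> trop" where
  "tplus NegInf y = y"
| "tplus x NegInf = x"
| "tplus (Fin a) (Fin b) = Fin (max a b)"

fun tmult :: "trop \<Rightarrow> trop \<Rightarrow> trop" where
  "tmult NegInf y = NegInf"
| "tmult x NegInf = NegInf"
| "tmult (Fin a) (Fin b) = Fin (a + b)"

definition tsum :: "('a \<Rightarrow> trop) \<Rightarrow> 'a set \<Rightarrow> trop" where
  "tsum f S = (if \<exists>x\<in>S. f x \<noteq> NegInf
               then Fin (Max {a. \<exists>x\<in>S. f x = Fin a}) else NegInf)"

section \<open>N x N matrices over T, indexed by a finite type 'n (N = CARD('n))\<close>

type_synonym 'n tmat = "'n \<Rightarrow> 'n \<Rightarrow> trop"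

definition tmat_mult :: "('n::finite) tmat \<Rightarrow> 'n tmat \<Rightarrow> 'n tmat" where
  "tmat_mult A B = (\<lambda>i j. tsum (\<lambda>k. tmult (A i k) (B k j)) UNIV)"

definition tmat_one :: "('n::finite) tmat" where
  "tmat_one = (\<lambda>i j. if i = j then Fin 0 else NegInf)"

definition meval :: "(nat \<Rightarrow> ('n::finite) tmat) \<Rightarrow> nat list \<Rightarrow> 'n tmat" where
  "meval g w = foldr (\<lambda>a M. tmat_mult (g a) M) w tmat_one"

section \<open>The Chinese monoid Ch_m, as words over {1..m} modulo a congruence\<close>

definition words :: "nat \<Rightarrow> nat list set" where
  "words m = {w. set w \<subseteq> {1..m}}"

definition ch_rel :: "nat \<Rightarrow> nat list \<Rightarrow> nat list \<Rightarrow> bool" where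
  "ch_rel m u v \<longleftrightarrow> (\<exists>i j k. 1 \<le> i \<and> i \<le> j \<and> j \<le> k \<and> k \<le> m \<and>
      ((u = [j,k,i] \<and> v = [k,j,i]) \<or> (u = [k,j,i] \<and> v = [k,i,j])))"

definition ch_step :: "nat \<Rightarrow> nat list \<Rightarrow> nat list \<Rightarrow> bool" where
  "ch_step m s t \<longleftrightarrow> (\<exists>x y u v. (ch_rel m u v \<or> ch_rel m v u) \<and>
      s = x @ u @ y \<and> t = x @ v @ y)"

definition ch_eq :: "nat \<Rightarrow> nat list \<Rightarrow> nat list \<Rightarrow> bool" where
  "ch_eq m = (ch_step m)\<^sup>*\<^sup>*"

text \<open>A map E on words defines a representation of Ch_m if it is constant on
  congruence classes (for E a word-homomorphism, such as meval g or a tuple of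
  these, this is exactly a monoid homomorphism from Ch_m); it is faithful if
  moreover the induced map on Ch_m is injective.\<close>
definition faithful_map :: "nat \<Rightarrow> (nat list \<Rightarrow> 'b) \<Rightarrow> bool" where
  "faithful_map m E \<longleftrightarrow>
     (\<forall>u\<in>words m. \<forall>v\<in>words m. ch_eq m u v \<longleftrightarrow> E u = E v)"

definition gen_shift :: "(nat \<Rightarrow> 'a) \<Rightarrow> nat \<Rightarrow> nat \<Rightarrow> 'a" where
  "gen_shift g l j = (if j \<le> l then g j else g (j - 1))"

definition tri :: "nat \<Rightarrow> (nat \<times> nat) set" where
  "tri m = {(j, i). 1 \<le> i \<and> i \<le> j \<and> j \<le> m}"

text \<open>b_j = (a_j a_1)^k_j1 ... (a_j a_(j-1))^k_j(j-1) a_j^k_jj; C_k = b_1 ... b_m.\<close>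
definition chword :: "nat \<Rightarrow> (nat \<times> nat \<Rightarrow> nat) \<Rightarrow> nat list" where
  "chword m k = concat (map (\<lambda>j.
       concat (map (\<lambda>i. concat (replicate (k (j, i)) [j, i])) [1..<j])
       @ replicate (k (j, j)) j) [1..<m+1])"

text \<open>phi (defined on tuples k indexed by tri m, with entries at positions P) is the
  restriction of an injective affine map: there is an affine map
  F(x) = c + L x on R^(tri m), injective, such that every entry at position p is
  F(k)_p, except for a set Z of positions whose entries are constantly -\<infinity>.\<close>
definition affine_inj_restr ::
    "nat \<Rightarrow> 'p set \<Rightarrow> ((nat \<times> nat \<Rightarrow> nat) \<Rightarrow> 'p \<Rightarrow> trop) \<Rightarrow> bool" where
  "affine_inj_restr m P phi \<longleftrightarrow>
     (\<exists>(c :: 'p \<Rightarrow> real) (L :: 'p \<Rightarrow> nat \<times> nat \<Rightarrow> real) Z. Z \<subseteq> P \<and>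
        (\<forall>x y :: nat \<times> nat \<Rightarrow> real.
            (\<forall>p\<in>P - Z. c p + (\<Sum>q\<in>tri m. L p q * x q) = c p + (\<Sum>q\<in>tri m. L p q * y q))
            \<longrightarrow> (\<forall>q\<in>tri m. x q = y q)) \<and>
        (\<forall>k. \<forall>p\<in>P. phi k p =
            (if p \<in> Z then NegInf else Fin (c p + (\<Sum>q\<in>tri m. L p q * real (k q))))))"

end

theory Submission
  imports Defs
begin


lemma ch_step_sym: "ch_step m s t \<Longrightarrow> ch_step m t s"
  unfolding ch_step_def by blast

lemma ch_eq_refl[simp]: "ch_eq m s s" by (simp add: ch_eq_def)

lemma ch_eq_sym: "ch_eq m s t \<Longrightarrow> ch_eq m t s"
  unfolding ch_eq_def
  by (metis ch_step_sym sympD symp_rtranclp sympI)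

lemma ch_eq_trans[trans]: "ch_eq m s t \<Longrightarrow> ch_eq m t u \<Longrightarrow> ch_eq m s u"
  unfolding ch_eq_def by auto

lemma ch_step_ctx: "ch_step m s t \<Longrightarrow> ch_step m (x @ s @ y) (x @ t @ y)"
  unfolding ch_step_def
  by (metis append.assoc)

lemma ch_eq_ctx: "ch_eq m s t \<Longrightarrow> ch_eq m (x @ s @ y) (x @ t @ y)"
  unfolding ch_eq_def
proof (induction rule: rtranclp_induct)
  case base then show ?case by simp
next
  case (step t u) then show ?case
    by (meson ch_step_ctx rtranclp.rtrancl_into_rtrancl)
qed

lemma ch_eq_app: "ch_eq m a b \<Longrightarrow> ch_eq m c d \<Longrightarrow> ch_eq m (a @ c) (b @ d)"
  using ch_eq_ctx[of m a b "[]" c] ch_eq_ctx[of m c d b "[]"]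
  by (auto intro: ch_eq_trans)

lemma ch_eq_appL: "ch_eq m c d \<Longrightarrow> ch_eq m (a @ c) (a @ d)"
  by (simp add: ch_eq_app)
lemma ch_eq_appR: "ch_eq m a b \<Longrightarrow> ch_eq m (a @ c) (b @ c)"
  by (simp add: ch_eq_app)

lemma ch_rel_mono: "ch_rel m u v \<Longrightarrow> m \<le> m' \<Longrightarrow> ch_rel m' u v"
  unfolding ch_rel_def by (blast intro: le_trans)

lemma ch_eq_mono: "ch_eq m s t \<Longrightarrow> m \<le> m' \<Longrightarrow> ch_eq m' s t"
  unfolding ch_eq_def
proof (induction rule: rtranclp_induct)
  case base then show ?case by simp
next
  case (step t u)
  then have "ch_step m' t u" unfolding ch_step_def using ch_rel_mono by blast
  with step show ?case by (meson rtranclp.rtrancl_into_rtrancl)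
qed

lemma rel1: "1 \<le> i \<Longrightarrow> i \<le> j \<Longrightarrow> j \<le> k \<Longrightarrow> k \<le> m \<Longrightarrow> ch_eq m [j,k,i] [k,j,i]"
  unfolding ch_eq_def ch_step_def ch_rel_def
  by (rule r_into_rtranclp) (rule exI[of _ "[]"], rule exI[of _ "[]"], auto)

lemma rel2: "1 \<le> i \<Longrightarrow> i \<le> j \<Longrightarrow> j \<le> k \<Longrightarrow> k \<le> m \<Longrightarrow> ch_eq m [k,j,i] [k,i,j]"
  unfolding ch_eq_def ch_step_def ch_rel_def
  by (rule r_into_rtranclp) (rule exI[of _ "[]"], rule exI[of _ "[]"], auto)



definition rep :: "nat \<Rightarrow> nat list \<Rightarrow> nat list" where
  "rep n l = concat (replicate n l)"

definition X :: "nat \<Rightarrow> nat \<Rightarrow> (nat \<Rightarrow> nat) \<Rightarrow> nat list" where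
  "X M i c = concat (map (\<lambda>h. rep (c h) [M,h]) [1..<i])"

definition blk :: "nat \<Rightarrow> (nat \<Rightarrow> nat) \<Rightarrow> nat \<Rightarrow> nat list" where
  "blk M c d = X M M c @ replicate d M"

lemma chword_blk: "chword m k = concat (map (\<lambda>j. blk j (\<lambda>i. k (j,i)) (k (j,j))) [1..<m+1])"
  by (simp add: chword_def blk_def rep_def X_def)

lemma rep_0[simp]: "rep 0 l = []" by (simp add: rep_def)
lemma rep_Suc: "rep (Suc n) l = l @ rep n l" by (simp add: rep_def)
lemma rep_Suc2: "rep (Suc n) l = rep n l @ l" by (simp add: rep_def replicate_append_same[symmetric])
lemma rep_add: "rep (a + b) l = rep a l @ rep b l" by (simp add: rep_def replicate_add)
lemma rep_single: "rep n [a] = replicate n a" by (induction n) (auto simp: rep_Suc)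
lemma map_rep: "map f (rep n l) = rep n (map f l)" by (simp add: rep_def map_concat)
lemma set_rep: "set (rep n l) \<subseteq> set l" by (auto simp: rep_def)

lemma X_0[simp]: "X M 0 c = []" by (simp add: X_def)
lemma X_1[simp]: "X M (Suc 0) c = []" by (simp add: X_def)
lemma X_Suc: "1 \<le> i \<Longrightarrow> X M (Suc i) c = X M i c @ rep (c i) [M,i]"
  by (simp add: X_def)
lemma X_cong: "(\<And>h. 1 \<le> h \<Longrightarrow> h < i \<Longrightarrow> c h = c' h) \<Longrightarrow> X M i c = X M i c'"
  unfolding X_def by (intro arg_cong[where f=concat] map_cong) auto
lemma X_upd: "i \<le> j \<Longrightarrow> X M i (c(j := v)) = X M i c"
  by (rule X_cong) auto

definition comm :: "nat \<Rightarrow> nat list \<Rightarrow> nat list \<Rightarrow> bool" where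
  "comm m u v \<longleftrightarrow> ch_eq m (u @ v) (v @ u)"

lemma comm_sym: "comm m u v \<Longrightarrow> comm m v u"
  by (simp add: comm_def ch_eq_sym)
lemma comm_Nil[simp]: "comm m u []" by (simp add: comm_def)
lemma comm_app: "comm m u v \<Longrightarrow> comm m u w \<Longrightarrow> comm m u (v @ w)"
  unfolding comm_def
proof -
  assume a: "ch_eq m (u @ v) (v @ u)" "ch_eq m (u @ w) (w @ u)"
  have "ch_eq m (u @ v @ w) (v @ u @ w)" using ch_eq_appR[OF a(1), of w] by simp
  also have "ch_eq m \<dots> (v @ w @ u)" using ch_eq_appL[OF a(2), of v] by simp
  finally show "ch_eq m (u @ v @ w) ((v @ w) @ u)" by simp
qed
lemma comm_rep: "comm m u v \<Longrightarrow> comm m u (rep n v)"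
  by (induction n) (auto simp: rep_Suc intro: comm_app)
lemma comm_concat: "(\<And>x. x \<in> set xs \<Longrightarrow> comm m u x) \<Longrightarrow> comm m u (concat xs)"
  by (induction xs) (auto intro: comm_app)
lemma comm_use: "comm m u v \<Longrightarrow> ch_eq m (a @ u @ v @ b) (a @ v @ u @ b)"
  unfolding comm_def using ch_eq_ctx by (metis append.assoc)

lemma c1: "1 \<le> i \<Longrightarrow> i \<le> M \<Longrightarrow> M \<le> m \<Longrightarrow> comm m [M] [M,i]"
  unfolding comm_def using rel2[of i M M m] by simp

lemma c2: assumes "1 \<le> h" "h \<le> i" "i \<le> M" "M \<le> m" shows "comm m [M,i] [M,h]"
proof -
  have "ch_eq m [M,i,M,h] [M,M,i,h]"
    using ch_eq_ctx[OF rel1[of h i M m], of "[M]" "[]"] assms by simp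
  also have "ch_eq m [M,M,i,h] [M,M,h,i]"
    using ch_eq_ctx[OF rel2[of h i M m], of "[M]" "[]"] assms by simp
  also have "ch_eq m [M,M,h,i] [M,h,M,i]"
    using ch_eq_ctx[OF rel2[of h M M m], of "[]" "[i]"] assms by simp
  finally show ?thesis unfolding comm_def by simp
qed

lemma c2': assumes "1 \<le> h" "1 \<le> i" "h \<le> M" "i \<le> M" "M \<le> m" shows "comm m [M,i] [M,h]"
proof (cases "h \<le> i")
  case True then show ?thesis using c2 assms by auto
next
  case False then show ?thesis using c2[of i h M m] assms by (auto intro: comm_sym)
qed

lemma e1: "1 \<le> i \<Longrightarrow> i \<le> x \<Longrightarrow> x \<le> M \<Longrightarrow> M \<le> m \<Longrightarrow> comm m [x] [M,i]"
  unfolding comm_def using rel1[of i x M m] rel2[of i x M m] by (auto intro: ch_eq_trans)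

lemma e2: "1 \<le> x \<Longrightarrow> x \<le> i \<Longrightarrow> i \<le> M \<Longrightarrow> M \<le> m \<Longrightarrow> ch_eq m [M,i,x] [i,M,x]"
  using rel1[of x i M m] by (auto intro: ch_eq_sym)

lemma comm_X: assumes "\<And>h. 1 \<le> h \<Longrightarrow> h < i \<Longrightarrow> comm m u [M,h]" shows "comm m u (X M i c)"
  unfolding X_def using assms by (auto intro!: comm_concat comm_rep)

lemma X_insert: assumes "1 \<le> x" "x < i" "i \<le> M" "M \<le> m"
  shows "ch_eq m (X M i c @ [M,x]) (X M i (c(x := Suc (c x))))"
  using assms
proof (induction i)
  case 0 then show ?case by simp
next
  case (Suc i)
  have i1: "1 \<le> i" using Suc by auto
  show ?case
  proof (cases "x = i")
    case True
    define c' where "c' = c(x := Suc (c x))"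
    have "X M i c' = X M i c" unfolding c'_def by (rule X_upd) (use True in simp)
    moreover have "c' i = Suc (c i)" using True by (simp add: c'_def)
    ultimately have "X M (Suc i) c' = X M (Suc i) c @ [M,i]" by (simp add: X_Suc[OF i1] rep_Suc2)
    then show ?thesis unfolding c'_def[symmetric] by (metis True ch_eq_refl)
  next
    case False
    then have xi: "x < i" using Suc by auto
    have "comm m [M,x] (rep (c i) [M,i])"
      by (rule comm_rep, rule c2') (use Suc xi in auto)
    then have "ch_eq m (X M i c @ rep (c i) [M,i] @ [M,x] @ []) (X M i c @ [M,x] @ rep (c i) [M,i] @ [])"
      by (intro comm_use, rule comm_sym)
    also have "ch_eq m (X M i c @ [M,x] @ rep (c i) [M,i] @ []) (X M i (c(x := Suc (c x))) @ rep (c i) [M,i])"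
    proof -
      have "ch_eq m (X M i c @ [M,x]) (X M i (c(x := Suc (c x))))"
        using Suc.IH[OF Suc.prems(1) xi] Suc.prems by (simp add: fun_upd_def)
      from ch_eq_appR[OF this, of "rep (c i) [M,i]"] show ?thesis by simp
    qed
    finally show ?thesis using i1 xi by (simp add: X_Suc fun_upd_def)
  qed
qed

lemma X_merge: assumes "i \<le> M" "M \<le> m"
  shows "ch_eq m (X M i c @ X M i c') (X M i (\<lambda>h. c h + c' h))"
  using assms
proof (induction i)
  case 0 then show ?case by simp
next
  case (Suc i)
  show ?case
  proof (cases "i = 0")
    case True then show ?thesis by simp
  next
    case False
    then have i1: "1 \<le> i" by simp
    have "comm m (rep (c i) [M,i]) (X M i c')"
      by (rule comm_X, rule comm_sym, rule comm_rep, rule c2') (use Suc in auto)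
    then have "ch_eq m (X M i c @ rep (c i) [M,i] @ X M i c' @ rep (c' i) [M,i])
                       (X M i c @ X M i c' @ rep (c i) [M,i] @ rep (c' i) [M,i])"
      by (intro comm_use)
    also have "ch_eq m (X M i c @ X M i c' @ rep (c i) [M,i] @ rep (c' i) [M,i])
                       (X M i (\<lambda>h. c h + c' h) @ rep (c i) [M,i] @ rep (c' i) [M,i])"
    proof -
      have "ch_eq m (X M i c @ X M i c') (X M i (\<lambda>h. c h + c' h))" using Suc.IH Suc.prems by simp
      from ch_eq_appR[OF this, of "rep (c i) [M,i] @ rep (c' i) [M,i]"] show ?thesis by simp
    qed
    finally show ?thesis using i1 by (simp add: X_Suc rep_add)
  qed
qed



lemma X_push: assumes "i \<le> M" "M \<le> m"
  shows "1 \<le> x \<Longrightarrow> x < M \<Longrightarrow> \<exists>y c'. 1 \<le> y \<and> y < M \<and> ch_eq m (X M i c @ [x]) ([y] @ X M i c')"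
  using assms
proof (induction i arbitrary: x c)
  case 0 then show ?case by auto
next
  case (Suc i)
  show ?case
  proof (cases "i = 0")
    case True then show ?thesis using Suc.prems by auto
  next
    case False
    then have i1: "1 \<le> i" by simp
    have XS: "\<And>c. X M (Suc i) c = X M i c @ rep (c i) [M,i]" by (rule X_Suc[OF i1])
    show ?thesis
    proof (cases "i \<le> x")
      case True
      have "comm m [x] (rep (c i) [M,i])"
        by (rule comm_rep, rule e1) (use Suc.prems True i1 in auto)
      then have s1: "ch_eq m (X M i c @ rep (c i) [M,i] @ [x] @ []) (X M i c @ [x] @ rep (c i) [M,i] @ [])"
        by (intro comm_use, rule comm_sym)
      obtain y c' where y: "1 \<le> y" "y < M" "ch_eq m (X M i c @ [x]) ([y] @ X M i c')"
        using Suc.IH[of x c] Suc.prems by auto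
      have "ch_eq m (X M i c @ [x] @ rep (c i) [M,i]) ([y] @ X M i c' @ rep (c i) [M,i])"
        using ch_eq_appR[OF y(3), of "rep (c i) [M,i]"] by simp
      also have "[y] @ X M i c' @ rep (c i) [M,i] = [y] @ X M (Suc i) (c'(i := c i))"
        using XS[of "c'(i := c i)"] X_upd[of i i M c' "c i"] by simp
      finally show ?thesis using s1 y XS[of c] by (auto intro: ch_eq_trans)
    next
      case False
      then have xi: "x < i" by simp
      show ?thesis
      proof (cases "c i")
        case 0
        obtain y c' where y: "1 \<le> y" "y < M" "ch_eq m (X M i c @ [x]) ([y] @ X M i c')"
          using Suc.IH[of x c] Suc.prems by auto
        have "[y] @ X M i c' = [y] @ X M (Suc i) (c'(i := 0))"
          using XS[of "c'(i := 0)"] X_upd[of i i M c' 0] by simp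
        then show ?thesis using y XS[of c] 0 by auto
      next
        case (Suc n)
        have "X M (Suc i) c @ [x] = X M i c @ rep n [M,i] @ [M,i,x]"
          using XS[of c] Suc by (simp add: rep_Suc2)
        also have "ch_eq m \<dots> (X M i c @ rep n [M,i] @ [i] @ [M,x])"
          using ch_eq_ctx[OF e2[of x i M m], of "X M i c @ rep n [M,i]" "[]"] xi Suc.prems i1 by simp
        also have "ch_eq m (X M i c @ rep n [M,i] @ [i] @ [M,x]) (X M i c @ [i] @ rep n [M,i] @ [M,x])"
          by (rule comm_use, rule comm_sym, rule comm_rep, rule e1) (use xi Suc.prems i1 in auto)
        also have "ch_eq m (X M i c @ [i] @ rep n [M,i] @ [M,x]) (X M i c @ [i] @ [M,x] @ rep n [M,i])"
        proof -
          have "comm m (rep n [M,i]) [M,x]"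
            by (rule comm_sym, rule comm_rep, rule c2') (use xi Suc.prems i1 in auto)
          from comm_use[OF this, of "X M i c @ [i]" "[]"] show ?thesis by simp
        qed
        finally have s1: "ch_eq m (X M (Suc i) c @ [x]) (X M i c @ [i] @ [M,x] @ rep n [M,i])" by simp
        obtain y c' where y: "1 \<le> y" "y < M" "ch_eq m (X M i c @ [i]) ([y] @ X M i c')"
          using Suc.IH[of i c] Suc.prems i1 by auto
        have "ch_eq m (X M i c @ [i] @ [M,x] @ rep n [M,i]) ([y] @ X M i c' @ [M,x] @ rep n [M,i])"
          using ch_eq_appR[OF y(3), of "[M,x] @ rep n [M,i]"] by simp
        also have "ch_eq m \<dots> ([y] @ X M i (c'(x := Suc (c' x))) @ rep n [M,i])"
          using ch_eq_ctx[OF X_insert[of x i M m c'], of "[y]" "rep n [M,i]"] Suc.prems xi by simp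
        also have "[y] @ X M i (c'(x := Suc (c' x))) @ rep n [M,i] = [y] @ X M (Suc i) ((c'(x := Suc (c' x)))(i := n))"
          using XS[of "(c'(x := Suc (c' x)))(i := n)"] X_upd[of i i M "c'(x := Suc (c' x))" n] by simp
        finally show ?thesis using s1 y by (auto intro: ch_eq_trans)
      qed
    qed
  qed
qed

lemma chword_Suc: "chword (Suc m) k = chword m k @ blk (Suc m) (\<lambda>i. k (Suc m, i)) (k (Suc m, Suc m))"
  by (simp add: chword_blk)

lemma chword_cong: "(\<And>j i. 1 \<le> j \<Longrightarrow> j \<le> m \<Longrightarrow> k (j,i) = k' (j,i)) \<Longrightarrow> chword m k = chword m k'"
  unfolding chword_blk by (intro arg_cong[where f=concat] map_cong) auto

lemma chword_zero: "chword m (\<lambda>_. 0) = []"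
  by (simp add: chword_def)

lemma blk_zero: "blk M (\<lambda>_. 0) 0 = []"
  by (simp add: blk_def X_def)

lemma chword_words: "chword m k \<in> words m"
  by (auto simp: words_def chword_def split: if_splits)

lemma words_app: "u @ v \<in> words m \<longleftrightarrow> u \<in> words m \<and> v \<in> words m"
  by (auto simp: words_def)

lemma repl_snoc: "replicate (Suc d) M @ [x] = replicate d M @ [M, x]"
  by (induction d) auto

lemma nf_exists: "w \<in> words m \<Longrightarrow> \<exists>k. ch_eq m w (chword m k)"
proof (induction m arbitrary: w)
  case 0
  then have "w = []" by (auto simp: words_def)
  then show ?case by (auto simp: chword_def)
next
  case (Suc m')
  define M where "M = Suc m'"
  have inner: "\<exists>k0 c d. ch_eq M w (chword m' k0 @ blk M c d)" if "w \<in> words M" for w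
    using that
  proof (induction w rule: rev_induct)
    case Nil
    show ?case by (rule exI[of _ "\<lambda>_. 0"], rule exI[of _ "\<lambda>_. 0"], rule exI[of _ 0])
                  (simp add: chword_zero blk_zero)
  next
    case (snoc x w)
    then have w: "w \<in> words M" and x: "1 \<le> x" "x \<le> M" by (auto simp: words_def)
    obtain k0 c d where IH: "ch_eq M w (chword m' k0 @ blk M c d)" using snoc.IH[OF w] by auto
    then have IH': "ch_eq M (w @ [x]) (chword m' k0 @ blk M c d @ [x])"
      using ch_eq_appR[OF IH, of "[x]"] by simp
    show ?case
    proof (cases "x = M")
      case True
      have "replicate d M @ [M] = replicate (Suc d) M" by (induction d) auto
      then have "blk M c d @ [x] = blk M c (Suc d)" using True by (simp add: blk_def)
      then show ?thesis using IH' by auto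
    next
      case False
      then have xM: "x < M" using x by simp
      show ?thesis
      proof (cases d)
        case (Suc d')
        have "blk M c d @ [x] = X M M c @ replicate d' M @ [M, x]"
          using Suc by (simp add: blk_def repl_snoc replicate_append_same)
        also have "ch_eq M \<dots> (X M M c @ [M, x] @ replicate d' M)"
        proof -
          have "comm M [M,x] (rep d' [M])"
            by (rule comm_rep, rule comm_sym, rule c1) (use x xM in auto)
          then show ?thesis using comm_use[of M "replicate d' M" "[M,x]" "X M M c" "[]"]
            by (simp add: rep_single comm_sym)
        qed
        also have "ch_eq M \<dots> (X M M (c(x := Suc (c x))) @ replicate d' M)"
          using ch_eq_appR[OF X_insert[of x M M M c], of "replicate d' M"] x xM by simp
        also have "\<dots> = blk M (c(x := Suc (c x))) d'" by (simp add: blk_def)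
        finally have "ch_eq M (blk M c d @ [x]) (blk M (c(x := Suc (c x))) d')" .
        from ch_eq_trans[OF IH' ch_eq_appL[OF this, of "chword m' k0"]] show ?thesis by blast
      next
        case 0
        obtain y c' where y: "1 \<le> y" "y < M" "ch_eq M (X M M c @ [x]) ([y] @ X M M c')"
          using X_push[of M M M x c] x xM by auto
        have "chword m' k0 @ [y] \<in> words m'"
          using y chword_words[of m' k0] by (auto simp: words_def M_def)
        then obtain k1 where k1: "ch_eq m' (chword m' k0 @ [y]) (chword m' k1)" using Suc.IH by blast
        have k1': "ch_eq M (chword m' k0 @ [y]) (chword m' k1)"
          by (rule ch_eq_mono[OF k1]) (simp add: M_def)
        have "ch_eq M (w @ [x]) (chword m' k0 @ X M M c @ [x])"
          using IH' 0 by (simp add: blk_def)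
        also have "ch_eq M \<dots> (chword m' k0 @ [y] @ X M M c')"
          using ch_eq_appL[OF y(3), of "chword m' k0"] by simp
        also have "ch_eq M \<dots> (chword m' k1 @ X M M c')"
          using ch_eq_appR[OF k1', of "X M M c'"] by simp
        also have "\<dots> = chword m' k1 @ blk M c' 0" by (simp add: blk_def)
        finally show ?thesis by blast
      qed
    qed
  qed
  obtain k0 c d where kcd: "ch_eq M w (chword m' k0 @ blk M c d)"
    using inner[of w] Suc.prems unfolding M_def by blast
  define k where "k = (\<lambda>(j,i). if j = M then (if i = M then d else c i) else k0 (j,i))"
  have "chword m' k = chword m' k0" by (rule chword_cong) (auto simp: k_def M_def)
  moreover have "blk M (\<lambda>i. k (M, i)) (k (M, M)) = blk M c d"
    unfolding blk_def X_def by (auto simp: k_def intro!: arg_cong[where f=concat] map_cong)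
  ultimately have "chword M k = chword m' k0 @ blk M c d"
    by (simp add: chword_Suc M_def)
  then show ?case using kcd M_def by metis
qed



definition sh :: "nat \<Rightarrow> nat \<Rightarrow> nat" where
  "sh l x = (if x \<le> l then x else x - 1)"

lemma ch_rel_sh: assumes "1 \<le> l" "l \<le> m" "ch_rel (Suc m) u v"
  shows "ch_rel m (map (sh l) u) (map (sh l) v)"
proof -
  obtain i j k where ijk: "1 \<le> i" "i \<le> j" "j \<le> k" "k \<le> Suc m"
    "(u = [j,k,i] \<and> v = [k,j,i]) \<or> (u = [k,j,i] \<and> v = [k,i,j])"
    using assms(3) unfolding ch_rel_def by blast
  have "1 \<le> sh l i" "sh l i \<le> sh l j" "sh l j \<le> sh l k" "sh l k \<le> m"
    using ijk assms by (auto simp: sh_def)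
  then show ?thesis unfolding ch_rel_def using ijk(5) by fastforce
qed

lemma ch_eq_sh: assumes "1 \<le> l" "l \<le> m" "ch_eq (Suc m) s t"
  shows "ch_eq m (map (sh l) s) (map (sh l) t)"
  using assms(3) unfolding ch_eq_def
proof (induction rule: rtranclp_induct)
  case base then show ?case by simp
next
  case (step t u)
  then have "ch_step m (map (sh l) t) (map (sh l) u)"
    unfolding ch_step_def using ch_rel_sh[OF assms(1,2)] by fastforce
  with step show ?case by (meson rtranclp.rtrancl_into_rtrancl)
qed

lemma words_sh: "1 \<le> l \<Longrightarrow> l \<le> m \<Longrightarrow> w \<in> words (Suc m) \<Longrightarrow> map (sh l) w \<in> words m"
  by (auto simp: words_def sh_def subset_iff)

definition kp :: "nat \<Rightarrow> (nat \<times> nat \<Rightarrow> 'a::comm_semiring_1) \<Rightarrow> nat \<times> nat \<Rightarrow> 'a" where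
  "kp l x = (\<lambda>(j,i). if j < l then x (j,i)
     else if j = l then (if i < l then x (l,i) + x (l+1,i) else x (l,l) + 2 * x (l+1,l) + x (l+1,l+1))
     else (if i < l then x (j+1,i) else if i = l then x (j+1,l) + x (j+1,l+1) else x (j+1,i+1)))"

lemma upt_split: "a \<le> b \<Longrightarrow> b \<le> c \<Longrightarrow> [a..<c] = [a..<b] @ [b..<c]"
  by (metis le_Suc_ex upt_add_eq_append)

lemma map_X: "map f (X M i c) = concat (map (\<lambda>h. rep (c h) [f M, f h]) [1..<i])"
  by (simp add: X_def map_concat map_rep comp_def)

lemma upt_split3: "a \<le> b \<Longrightarrow> b < c \<Longrightarrow> [a..<c] = [a..<b] @ [b] @ [Suc b..<c]"
proof -
  assume "a \<le> b" "b < c"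
  then have "[a..<c] = [a..<b] @ [b..<c]" by (intro upt_split) auto
  moreover have "[b..<c] = [b] @ [Suc b..<c]" using \<open>b < c\<close> by (simp add: upt_conv_Cons)
  ultimately show ?thesis by simp
qed

lemma upt_split4: "a \<le> b \<Longrightarrow> Suc b < c \<Longrightarrow> [a..<c] = [a..<b] @ [b, Suc b] @ [Suc (Suc b)..<c]"
proof -
  assume "a \<le> b" "Suc b < c"
  then have "[a..<c] = [a..<b] @ [b..<c]" by (intro upt_split) auto
  moreover have "[b..<c] = [b, Suc b] @ [Suc (Suc b)..<c]" using \<open>Suc b < c\<close> by (simp add: upt_conv_Cons)
  ultimately show ?thesis by simp
qed

lemma set_blk: "set (blk j c d) \<subseteq> {..j}"
  by (auto simp: blk_def X_def rep_def)

lemma blk_sh_low: "j \<le> l \<Longrightarrow> map (sh l) (blk j c d) = blk j c d"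
  using set_blk[of j c d] by (intro map_idI) (auto simp: sh_def)

lemma rep_twice: "rep n [a,a] = replicate (2*n) a"
  by (induction n) (auto simp: rep_Suc)

lemma blk_sh_high: assumes "1 \<le> l" "l + 2 \<le> j"
  shows "map (sh l) (blk j c d) =
    blk (j-1) (\<lambda>i. if i < l then c i else if i = l then c l + c (l+1) else c (i+1)) d"
proof -
  define c'' where "c'' = (\<lambda>i. if i < l then c i else if i = l then c l + c (l+1) else c (i+1))"
  have sj: "sh l j = j - 1" using assms by (simp add: sh_def)
  have A: "[1..<j] = [1..<l] @ [l, Suc l] @ [Suc (Suc l)..<j]"
    by (rule upt_split4) (use assms in auto)
  have B: "[1..<j-1] = [1..<l] @ [l] @ [Suc l..<j-1]"
    by (rule upt_split3) (use assms in auto)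
  have C: "[Suc (Suc l)..<j] = map Suc [Suc l..<j-1]"
    using assms by (simp add: map_Suc_upt)
  have lo: "map (\<lambda>h. rep (c h) [j-1, sh l h]) [1..<l] = map (\<lambda>h. rep (c'' h) [j-1, h]) [1..<l]"
    by (rule map_cong) (auto simp: sh_def c''_def)
  have hi: "map (\<lambda>h. rep (c h) [j-1, sh l h]) (map Suc [Suc l..<j-1]) = map (\<lambda>h. rep (c'' h) [j-1, h]) [Suc l..<j-1]"
    unfolding map_map by (rule map_cong) (auto simp: sh_def c''_def)
  have mid: "rep (c l) [j-1, sh l l] @ rep (c (Suc l)) [j-1, sh l (Suc l)] = rep (c'' l) [j-1, l]"
    by (simp add: sh_def c''_def rep_add)
  have "map (sh l) (X j j c) = X (j-1) (j-1) c''"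
    unfolding map_X sj unfolding X_def A B
    apply (simp only: map_append concat_append C)
    using lo hi mid by (simp only: list.map concat.simps append_Nil2 append_assoc)
  moreover have "map (sh l) (replicate d j) = replicate d (j-1)" using sj by simp
  ultimately show ?thesis by (simp add: blk_def c''_def)
qed

lemma blk_sh_top: assumes "1 \<le> l"
  shows "map (sh l) (blk (Suc l) c d) = X l l c @ rep (c l) [l,l] @ replicate d l"
proof -
  have "map (sh l) (X (Suc l) l c) = X l l c"
    unfolding map_X unfolding X_def by (intro arg_cong[where f=concat] map_cong) (auto simp: sh_def)
  then show ?thesis using assms
    by (simp add: blk_def X_Suc map_rep sh_def)
qed

lemma middle: assumes "1 \<le> l" "l \<le> m"
  shows "ch_eq m (map (sh l) (blk l c d @ blk (Suc l) c' d'))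
                 (blk l (\<lambda>i. c i + c' i) (d + 2 * c' l + d'))"
proof -
  have "map (sh l) (blk l c d @ blk (Suc l) c' d') =
        X l l c @ replicate d l @ X l l c' @ rep (c' l) [l,l] @ replicate d' l"
    using assms by (simp add: blk_sh_low blk_sh_top) (simp add: blk_def)
  also have "ch_eq m \<dots> (X l l c @ X l l c' @ replicate d l @ rep (c' l) [l,l] @ replicate d' l)"
  proof -
    have "comm m (rep d [l]) (X l l c')"
      by (rule comm_X, rule comm_sym, rule comm_rep, rule comm_sym, rule c1) (use assms in auto)
    from comm_use[OF this, of "X l l c" "rep (c' l) [l,l] @ replicate d' l"]
    show ?thesis by (simp add: rep_single)
  qed
  also have "ch_eq m \<dots> (X l l (\<lambda>i. c i + c' i) @ replicate d l @ rep (c' l) [l,l] @ replicate d' l)"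
    using ch_eq_appR[OF X_merge[of l l m c c'], of "replicate d l @ rep (c' l) [l,l] @ replicate d' l"] assms
    by simp
  also have "\<dots> = blk l (\<lambda>i. c i + c' i) (d + 2 * c' l + d')"
    by (simp add: blk_def rep_twice replicate_add)
  finally show ?thesis .
qed

lemma P_lemma: assumes "1 \<le> l" "l \<le> m"
  shows "ch_eq m (map (sh l) (chword (Suc m) k)) (chword m (kp l k))"
proof -
  define R where "R = (\<lambda>k j. blk j (\<lambda>i. k (j,i)) (k (j,j)))"
  have cw: "\<And>m k. chword m k = concat (map (R k) [1..<m+1])" by (simp add: chword_blk R_def)
  have S1: "[1..<Suc m + 1] = [1..<l] @ [l, Suc l] @ [Suc (Suc l)..<Suc m + 1]"
    by (rule upt_split4) (use assms in auto)
  have S2: "[1..<m + 1] = [1..<l] @ [l] @ [Suc l..<m+1]"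
    by (rule upt_split3) (use assms in auto)
  have low: "map (\<lambda>j. map (sh l) (R k j)) [1..<l] = map (R (kp l k)) [1..<l]"
    by (rule map_cong) (auto simp: R_def blk_sh_low kp_def)
  have C: "[Suc (Suc l)..<Suc m + 1] = map Suc [Suc l..<m+1]" by (simp add: map_Suc_upt)
  have pt: "map (sh l) (R k (Suc j)) = R (kp l k) j" if j: "j \<in> set [Suc l..<m+1]" for j
  proof -
    have "map (sh l) (R k (Suc j)) = blk j (\<lambda>i. if i < l then k (Suc j, i) else if i = l then k (Suc j, l) + k (Suc j, l+1) else k (Suc j, i+1)) (k (Suc j, Suc j))"
    proof -
      have "l + 2 \<le> Suc j" using j by auto
      from blk_sh_high[OF assms(1) this] show ?thesis unfolding R_def by simp
    qed
    also have "\<dots> = R (kp l k) j"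
      unfolding R_def blk_def using j
      by (intro arg_cong2[where f="(@)"] X_cong) (auto simp: kp_def)
    finally show ?thesis .
  qed
  have high: "map (\<lambda>j. map (sh l) (R k j)) [Suc (Suc l)..<Suc m + 1] = map (R (kp l k)) [Suc l..<m+1]"
    unfolding C map_map by (rule map_cong) (simp_all add: pt)
  have midR: "R (kp l k) l = blk l (\<lambda>i. k (l,i) + k (Suc l, i)) (k (l,l) + 2 * k (Suc l, l) + k (Suc l, Suc l))"
    unfolding R_def blk_def
    by (intro arg_cong2[where f="(@)"] X_cong) (auto simp: kp_def)
  have "map (sh l) (chword (Suc m) k) =
        concat (map (\<lambda>j. map (sh l) (R k j)) [1..<l]) @ map (sh l) (R k l @ R k (Suc l)) @
        concat (map (\<lambda>j. map (sh l) (R k j)) [Suc (Suc l)..<Suc m + 1])"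
    unfolding cw S1 by (simp add: map_concat comp_def)
  also have "ch_eq m \<dots> (concat (map (R (kp l k)) [1..<l]) @ R (kp l k) l @ concat (map (R (kp l k)) [Suc l..<m+1]))"
    unfolding low high midR
    by (rule ch_eq_ctx) (unfold R_def, rule middle[OF assms])
  also have "\<dots> = chword m (kp l k)"
    unfolding cw S2 by simp
  finally show ?thesis .
qed



type_synonym st = "nat \<times> nat \<times> nat \<times> nat \<times> nat \<times> nat"

fun act :: "st \<Rightarrow> nat \<Rightarrow> st" where
  "act (a,b,c,d,e,f) x =
    (if x = 3 then (a,b,c,d,e,f+1)
     else if 0 < f then (if x = 1 then (a,b,c,d+1,e,f-1) else (a,b,c,d,e+1,f-1))
     else if x = 2 then (a,b,c+1,d,e,f)
     else if 0 < e then (a,b,c+1,d+1,e-1,f)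
     else if 0 < c then (a,b+1,c-1,d,e,f)
     else (a+1,b,c,d,e,f))"

definition run :: "st \<Rightarrow> nat list \<Rightarrow> st" where
  "run z w = foldl act z w"

lemma run_app: "run z (u @ v) = run (run z u) v" by (simp add: run_def)

lemma run_rel: assumes "1 \<le> i" "i \<le> j" "j \<le> k" "k \<le> 3"
  shows "run z [j,k,i] = run z [k,j,i] \<and> run z [k,j,i] = run z [k,i,j]"
proof -
  obtain a b c d e f where z: "z = (a,b,c,d,e,f)" by (cases z) auto
  have "(i = 1 \<or> i = 2 \<or> i = 3) \<and> (j = 1 \<or> j = 2 \<or> j = 3) \<and> (k = 1 \<or> k = 2 \<or> k = 3)"
    using assms by auto
  then show ?thesis using assms unfolding z run_def
    by (elim conjE disjE) (auto split: if_splits)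
qed

lemma run_ch_eq: assumes "ch_eq 3 s t" shows "run z s = run z t"
  using assms unfolding ch_eq_def
proof (induction arbitrary: z rule: rtranclp_induct)
  case base then show ?case by simp
next
  case (step t u)
  obtain x y p q where xy: "ch_rel 3 p q \<or> ch_rel 3 q p" "t = x @ p @ y" "u = x @ q @ y"
    using step(2) unfolding ch_step_def by blast
  have "run w p = run w q" for w
    using xy(1) run_rel unfolding ch_rel_def by (elim disjE exE conjE) metis+
  then have "run z t = run z u" using xy by (simp add: run_app)
  then show ?case using step by simp
qed

lemma r1: "run (a,b,0,d,0,0) (replicate n 1) = (a+n,b,0,d,0,0)"
  by (induction n arbitrary: a) (auto simp: run_def)
lemma r21: "run (a,b,0,0,0,0) (rep n [2,1]) = (a,b+n,0,0,0,0)"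
  by (induction n arbitrary: b) (auto simp: run_def rep_Suc)
lemma r2: "run (a,b,c,0,0,0) (replicate n 2) = (a,b,c+n,0,0,0)"
  by (induction n arbitrary: c) (auto simp: run_def)
lemma r31: "run (a,b,c,d,0,0) (rep n [3,1]) = (a,b,c,d+n,0,0)"
  by (induction n arbitrary: d) (auto simp: run_def rep_Suc)
lemma r32: "run (a,b,c,d,e,0) (rep n [3,2]) = (a,b,c,d,e+n,0)"
  by (induction n arbitrary: e) (auto simp: run_def rep_Suc)
lemma r3: "run (a,b,c,d,e,f) (replicate n 3) = (a,b,c,d,e,f+n)"
  by (induction n arbitrary: f) (auto simp: run_def)

lemma chword3: "chword 3 k = replicate (k (1,1)) 1 @ rep (k (2,1)) [2,1] @ replicate (k (2,2)) 2 @
   rep (k (3,1)) [3,1] @ rep (k (3,2)) [3,2] @ replicate (k (3,3)) 3"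
  by (simp add: chword_def rep_def eval_nat_numeral upt_rec)

lemma run_chword3: "run (0,0,0,0,0,0) (chword 3 k) = (k (1,1), k (2,1), k (2,2), k (3,1), k (3,2), k (3,3))"
  unfolding chword3 run_app r1 r21 r2 r31 r32 r3 by simp

lemma U3: assumes "ch_eq 3 (chword 3 k) (chword 3 k')" shows "\<forall>q\<in>tri 3. k q = k' q"
proof -
  have "run (0,0,0,0,0,0) (chword 3 k) = run (0,0,0,0,0,0) (chword 3 k')"
    by (rule run_ch_eq[OF assms])
  then have eq: "k (1,1) = k' (1,1)" "k (2,1) = k' (2,1)" "k (2,2) = k' (2,2)"
     "k (3,1) = k' (3,1)" "k (3,2) = k' (3,2)" "k (3,3) = k' (3,3)"
    unfolding run_chword3 by auto
  show ?thesis
  proof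
    fix q assume "q \<in> tri 3"
    then obtain j i where q: "q = (j,i)" "1 \<le> i" "i \<le> j" "j \<le> 3" by (auto simp: tri_def)
    then have "(j,i) \<in> {(1,1),(2,1),(2,2),(3,1),(3,2),(3,3)}" by auto
    then show "k q = k' q" using eq q(1) by auto
  qed
qed



lemma kp_inj: fixes x y :: "nat \<times> nat \<Rightarrow> real"
  assumes m3: "3 \<le> m"
    and h0: "\<And>l q. l \<in> {1,2,m} \<Longrightarrow> q \<in> tri m \<Longrightarrow> kp l x q = kp l y q"
  shows "\<forall>q\<in>tri (Suc m). x q = y q"
proof -
  have h: "kp l x (j,i) = kp l y (j,i)" if "l \<in> {1,2,m}" "1 \<le> i" "i \<le> j" "j \<le> m" for l j i
    using h0[of l "(j,i)"] that by (auto simp: tri_def)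
  have low: "x (j,i) = y (j,i)" if "j < m" "1 \<le> i" "i \<le> j" for j i
  proof -
    have "kp m x (j,i) = x (j,i)" "kp m y (j,i) = y (j,i)" using that by (simp_all add: kp_def)
    moreover have "kp m x (j,i) = kp m y (j,i)" by (rule h) (use that in auto)
    ultimately show ?thesis by simp
  qed
  have hi: "x (j,i) = y (j,i)" if a: "3 \<le> j" "j \<le> Suc m" "3 \<le> i" "i \<le> j" for j i
  proof -
    obtain j' i' where ji: "j = Suc j'" "i = Suc i'" using a by (cases j; cases i) auto
    have "kp 1 x (j',i') = kp 1 y (j',i')" using h[where l=1 and j=j' and i=i'] a ji by auto
    then show ?thesis using a ji by (simp add: kp_def)
  qed
  have c1: "x (j,1) = y (j,1)" if a: "4 \<le> j" "j \<le> Suc m" for j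
  proof -
    obtain j' where ji: "j = Suc j'" using a by (cases j) auto
    have "kp 2 x (j',1) = kp 2 y (j',1)" using h[where l=2 and j=j' and i=1] a ji by auto
    then show ?thesis using a ji by (simp add: kp_def)
  qed
  have c2: "x (j,1) + x (j,2) = y (j,1) + y (j,2)" if a: "3 \<le> j" "j \<le> Suc m" for j
  proof -
    obtain j' where ji: "j = Suc j'" using a by (cases j) auto
    have "kp 1 x (j',1) = kp 1 y (j',1)" using h[where l=1 and j=j' and i=1] a ji by auto
    then show ?thesis using a ji by (simp add: kp_def numeral_2_eq_2)
  qed
  have c3: "x (2,1) + x (3,1) = y (2,1) + y (3,1)"
    using h[where l=2 and j=2 and i=1] m3 by (simp add: kp_def)
  have x21: "x (2,1) = y (2,1)" using low[of 2 1] m3 by simp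
  show ?thesis
  proof
    fix q assume "q \<in> tri (Suc m)"
    then obtain j i where q: "q = (j,i)" "1 \<le> i" "i \<le> j" "j \<le> Suc m" by (auto simp: tri_def)
    show "x q = y q"
    proof (cases "j < m")
      case True then show ?thesis using low q by auto
    next
      case False
      then have j3: "3 \<le> j" using m3 by simp
      show ?thesis
      proof (cases "3 \<le> i")
        case True then show ?thesis using hi[of j i] q j3 by auto
      next
        case False
        then have "i = 1 \<or> i = 2" using q by auto
        moreover have "x (j,1) = y (j,1)"
        proof (cases "j = 3")
          case True then show ?thesis using c3 x21 by simp
        next
          case False then show ?thesis using c1[of j] j3 q by auto
        qed
        moreover have "x (j,2) = y (j,2)" using c2[of j] j3 q \<open>x (j,1) = y (j,1)\<close> by auto
        ultimately show ?thesis using q by auto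
      qed
    qed
  qed
qed

lemma kp_of_nat: "kp l (\<lambda>q. real (k q)) q = real (kp l k q)"
  by (cases q) (simp add: kp_def)

lemma kp_inj_nat: fixes k k' :: "nat \<times> nat \<Rightarrow> nat"
  assumes "3 \<le> m" "\<And>l. l \<in> {1,2,m} \<Longrightarrow> \<forall>q\<in>tri m. kp l k q = kp l k' q"
  shows "\<forall>q\<in>tri (Suc m). k q = k' q"
proof -
  have "\<forall>q\<in>tri (Suc m). real (k q) = real (k' q)"
    by (rule kp_inj[OF assms(1)]) (use assms(2) in \<open>auto simp: kp_of_nat\<close>)
  then show ?thesis by simp
qed

lemma Um: "3 \<le> m \<Longrightarrow> ch_eq m (chword m k) (chword m k') \<Longrightarrow> \<forall>q\<in>tri m. k q = k' q"
proof (induction m arbitrary: k k' rule: nat_induct_at_least)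
  case base then show ?case using U3 by blast
next
  case (Suc m)
  show ?case
  proof (rule kp_inj_nat[OF Suc.hyps(1)])
    fix l :: nat assume l: "l \<in> {1,2,m}"
    then have l1: "1 \<le> l" "l \<le> m" using Suc.hyps(1) by auto
    have "ch_eq m (map (sh l) (chword (Suc m) k)) (map (sh l) (chword (Suc m) k'))"
      by (rule ch_eq_sh[OF l1 Suc.prems])
    then have "ch_eq m (chword m (kp l k)) (chword m (kp l k'))"
      using P_lemma[OF l1, of k] P_lemma[OF l1, of k'] by (meson ch_eq_sym ch_eq_trans)
    then show "\<forall>q\<in>tri m. kp l k q = kp l k' q" using Suc.IH by blast
  qed
qed

lemma mem_tri: "(j,i) \<in> tri m \<longleftrightarrow> 1 \<le> i \<and> i \<le> j \<and> j \<le> m"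
  by (simp add: tri_def)

lemma kp_lin: fixes x :: "nat \<times> nat \<Rightarrow> real"
  assumes "1 \<le> l" "l \<le> m" "q \<in> tri m"
  shows "kp l x q = (\<Sum>q'\<in>tri (Suc m). kp l (\<lambda>r. if r = q' then 1 else 0) q * x q')"
proof -
  obtain j i where q: "q = (j,i)" "1 \<le> i" "i \<le> j" "j \<le> m" using assms(3) by (auto simp: tri_def)
  have fin: "finite (tri (Suc m))"
    by (rule finite_subset[of _ "{0..Suc m} \<times> {0..Suc m}"]) (auto simp: tri_def)
  have d: "(\<Sum>q'\<in>tri (Suc m). (if a = q' then 1 else 0) * x q') = x a" if a: "a \<in> tri (Suc m)" for a
  proof -
    have "(\<Sum>q'\<in>tri (Suc m). (if a = q' then 1 else 0) * x q') = (\<Sum>q'\<in>tri (Suc m). (if a = q' then x q' else 0))"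
      by (rule sum.cong) auto
    also have "\<dots> = x a" using fin a by (simp add: sum.delta)
    finally show ?thesis .
  qed
  show ?thesis using q assms(1,2)
    by (auto simp: kp_def distrib_right sum.distrib mult.assoc sum_distrib_left[symmetric] d mem_tri)
qed



lemma meval_comp: "meval (\<lambda>j. g (f j)) w = meval g (map f w)"
  by (induction w) (simp_all add: meval_def)

lemma gen_shift_sh: "gen_shift g l = (\<lambda>j. g (sh l j))"
  by (auto simp: gen_shift_def sh_def)

lemma meval_shift: "meval (gen_shift g l) w = meval g (map (sh l) w)"
  unfolding gen_shift_sh by (rule meval_comp)

lemma chword_cong_tri: assumes "\<forall>q\<in>tri m. k q = k' q" shows "chword m k = chword m k'"
  unfolding chword_def
proof (intro arg_cong[where f=concat] map_cong refl)
  fix j assume j: "j \<in> set [1..<m+1]"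
  have e1: "map (\<lambda>i. concat (replicate (k (j, i)) [j, i])) [1..<j] = map (\<lambda>i. concat (replicate (k' (j, i)) [j, i])) [1..<j]"
    by (rule map_cong) (use assms j in \<open>auto simp: mem_tri\<close>)
  have e2: "k (j,j) = k' (j,j)" using assms j by (auto simp: mem_tri)
  show "concat (map (\<lambda>i. concat (replicate (k (j, i)) [j, i])) [1..<j]) @ replicate (k (j, j)) j =
        concat (map (\<lambda>i. concat (replicate (k' (j, i)) [j, i])) [1..<j]) @ replicate (k' (j, j)) j"
    unfolding e1 e2 ..
qed

theorem lemma1p5:
  fixes n :: nat and g :: "nat \<Rightarrow> ('n::finite) tmat"
  assumes "3 \<le> n"
    and "faithful_map n (meval g)"
  shows "faithful_map (n + 1)
           (\<lambda>w. (meval (gen_shift g 1) w, meval (gen_shift g 2) w, meval (gen_shift g n) w))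
         \<and> (affine_inj_restr n (UNIV :: ('n \<times> 'n) set)
           (\<lambda>k (r, s). meval g (chword n k) r s)
         \<longrightarrow> affine_inj_restr (n + 1) ({1, 2, 3} \<times> (UNIV :: ('n \<times> 'n) set))
           (\<lambda>k (t, r, s). meval (gen_shift g (if t = (1::nat) then 1 else if t = 2 then 2 else n))
                              (chword (n + 1) k) r s))"
proof -
  have n3: "3 \<le> n" by fact
  have fa: "ch_eq n u v \<longleftrightarrow> meval g u = meval g v" if "u \<in> words n" "v \<in> words n" for u v
    using assms(2) that unfolding faithful_map_def by blast
  have lrange: "1 \<le> l \<and> l \<le> n" if "l \<in> {1,2,n}" for l :: nat using that n3 by auto
  have key: "meval (gen_shift g l) (chword (n+1) k) = meval g (chword n (kp l k))"
    if l: "l \<in> {1,2,n}" for l k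
  proof -
    have l1: "1 \<le> l" "l \<le> n" using lrange[OF l] by auto
    have "ch_eq n (map (sh l) (chword (Suc n) k)) (chword n (kp l k))" by (rule P_lemma[OF l1])
    moreover have "map (sh l) (chword (Suc n) k) \<in> words n" by (rule words_sh[OF l1 chword_words])
    ultimately show ?thesis unfolding meval_shift using fa chword_words by simp
  qed
  have hom: "meval (gen_shift g l) u = meval (gen_shift g l) v \<longleftrightarrow> ch_eq n (map (sh l) u) (map (sh l) v)"
    if l: "l \<in> {1,2,n}" and uv: "u \<in> words (Suc n)" "v \<in> words (Suc n)" for l u v
  proof -
    have l1: "1 \<le> l" "l \<le> n" using lrange[OF l] by auto
    show ?thesis using fa[OF words_sh[OF l1 uv(1)] words_sh[OF l1 uv(2)]] by (simp add: meval_shift)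
  qed
  have part1: "faithful_map (n + 1)
           (\<lambda>w. (meval (gen_shift g 1) w, meval (gen_shift g 2) w, meval (gen_shift g n) w))"
    unfolding faithful_map_def
  proof (intro ballI)
    fix u v assume u: "u \<in> words (n+1)" and v: "v \<in> words (n+1)"
    then have u': "u \<in> words (Suc n)" and v': "v \<in> words (Suc n)" by auto
    have "ch_eq (n+1) u v \<longleftrightarrow> (\<forall>l\<in>{1,2,n}. ch_eq n (map (sh l) u) (map (sh l) v))"
    proof
      assume "ch_eq (n+1) u v"
      then show "\<forall>l\<in>{1,2,n}. ch_eq n (map (sh l) u) (map (sh l) v)"
        using ch_eq_sh lrange by simp
    next
      assume H: "\<forall>l\<in>{1,2,n}. ch_eq n (map (sh l) u) (map (sh l) v)"
      obtain k where k: "ch_eq (Suc n) u (chword (Suc n) k)" using nf_exists[OF u'] by blast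
      obtain k' where k': "ch_eq (Suc n) v (chword (Suc n) k')" using nf_exists[OF v'] by blast
      have "\<forall>q\<in>tri (Suc n). k q = k' q"
      proof (rule kp_inj_nat[OF n3])
        fix l :: nat assume l: "l \<in> {1,2,n}"
        have l1: "1 \<le> l" "l \<le> n" using lrange[OF l] by auto
        have a: "ch_eq n (map (sh l) u) (chword n (kp l k))"
          using ch_eq_trans[OF ch_eq_sh[OF l1 k] P_lemma[OF l1]] .
        have b: "ch_eq n (map (sh l) v) (chword n (kp l k'))"
          using ch_eq_trans[OF ch_eq_sh[OF l1 k'] P_lemma[OF l1]] .
        have "ch_eq n (chword n (kp l k)) (chword n (kp l k'))"
          using a b H l by (meson ch_eq_sym ch_eq_trans)
        then show "\<forall>q\<in>tri n. kp l k q = kp l k' q" by (rule Um[OF n3])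
      qed
      then have "chword (Suc n) k = chword (Suc n) k'" by (rule chword_cong_tri)
      then show "ch_eq (n+1) u v" using k k' by (metis Suc_eq_plus1 ch_eq_sym ch_eq_trans)
    qed
    also have "\<dots> \<longleftrightarrow> (meval (gen_shift g 1) u, meval (gen_shift g 2) u, meval (gen_shift g n) u) =
                     (meval (gen_shift g 1) v, meval (gen_shift g 2) v, meval (gen_shift g n) v)"
      using hom[OF _ u' v'] by auto
    finally show "ch_eq (n+1) u v \<longleftrightarrow> (meval (gen_shift g 1) u, meval (gen_shift g 2) u, meval (gen_shift g n) u) =
                     (meval (gen_shift g 1) v, meval (gen_shift g 2) v, meval (gen_shift g n) v)" .
  qed
  have part2: "affine_inj_restr n (UNIV :: ('n \<times> 'n) set) (\<lambda>k (r, s). meval g (chword n k) r s)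
         \<Longrightarrow> affine_inj_restr (n + 1) ({1, 2, 3} \<times> (UNIV :: ('n \<times> 'n) set))
           (\<lambda>k (t, r, s). meval (gen_shift g (if t = (1::nat) then 1 else if t = 2 then 2 else n))
                              (chword (n + 1) k) r s)"
  proof -
    assume "affine_inj_restr n (UNIV :: ('n \<times> 'n) set) (\<lambda>k (r, s). meval g (chword n k) r s)"
    then obtain c :: "'n \<times> 'n \<Rightarrow> real" and L :: "'n \<times> 'n \<Rightarrow> nat \<times> nat \<Rightarrow> real" and Z where
      inj0: "\<forall>x y :: nat \<times> nat \<Rightarrow> real.
            (\<forall>p\<in>UNIV - Z. c p + (\<Sum>q\<in>tri n. L p q * x q) = c p + (\<Sum>q\<in>tri n. L p q * y q))
            \<longrightarrow> (\<forall>q\<in>tri n. x q = y q)" and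
      val0: "\<forall>k. \<forall>p\<in>UNIV. (\<lambda>k (r, s). meval g (chword n k) r s) k p =
            (if p \<in> Z then NegInf else Fin (c p + (\<Sum>q\<in>tri n. L p q * real (k q))))"
      unfolding affine_inj_restr_def by blast
    have inj: "\<forall>q\<in>tri n. x q = y q"
      if "\<forall>p\<in>UNIV - Z. c p + (\<Sum>q\<in>tri n. L p q * x q) = c p + (\<Sum>q\<in>tri n. L p q * y q)"
      for x y :: "nat \<times> nat \<Rightarrow> real"
      using inj0 that by blast
    have val: "meval g (chword n k) r s =
            (if (r,s) \<in> Z then NegInf else Fin (c (r,s) + (\<Sum>q\<in>tri n. L (r,s) q * real (k q))))" for k r s
      using bspec[OF spec[OF val0, of k], of "(r,s)"] by simp
    define lv :: "nat \<Rightarrow> nat" where "lv t = (if t = 1 then 1 else if t = 2 then 2 else n)" for t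
    have lv: "lv t \<in> {1,2,n}" for t by (simp add: lv_def)
    define A :: "nat \<Rightarrow> nat \<times> nat \<Rightarrow> nat \<times> nat \<Rightarrow> real"
      where "A l q q' = kp l (\<lambda>r. if r = q' then 1 else 0) q" for l q q'
    define L' :: "nat \<times> 'n \<times> 'n \<Rightarrow> nat \<times> nat \<Rightarrow> real"
      where "L' = (\<lambda>(t, p) q'. \<Sum>q\<in>tri n. L p q * A (lv t) q q')"
    define c' :: "nat \<times> 'n \<times> 'n \<Rightarrow> real" where "c' = (\<lambda>(t, p). c p)"
    define Z' :: "(nat \<times> 'n \<times> 'n) set" where "Z' = {1,2,3} \<times> Z"
    have fin: "finite (tri m)" for m
      by (rule finite_subset[of _ "{0..m} \<times> {0..m}"]) (auto simp: tri_def)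
    have lin: "(\<Sum>q'\<in>tri (n+1). L' (t,p) q' * x q') = (\<Sum>q\<in>tri n. L p q * kp (lv t) x q)" for t p x
    proof -
      have l1: "1 \<le> lv t" "lv t \<le> n" using lrange[OF lv] by auto
      have "(\<Sum>q'\<in>tri (n+1). L' (t,p) q' * x q') = (\<Sum>q'\<in>tri (n+1). \<Sum>q\<in>tri n. L p q * (A (lv t) q q' * x q'))"
        unfolding L'_def by (simp add: sum_distrib_right mult.assoc)
      also have "\<dots> = (\<Sum>q\<in>tri n. \<Sum>q'\<in>tri (n+1). L p q * (A (lv t) q q' * x q'))"
        by (rule sum.swap)
      also have "\<dots> = (\<Sum>q\<in>tri n. L p q * kp (lv t) x q)"
      proof (rule sum.cong[OF refl])
        fix q assume q: "q \<in> tri n"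
        show "(\<Sum>q'\<in>tri (n+1). L p q * (A (lv t) q q' * x q')) = L p q * kp (lv t) x q"
          unfolding sum_distrib_left[symmetric] A_def using kp_lin[OF l1 q, of x] by simp
      qed
      finally show ?thesis .
    qed
    show ?thesis
      unfolding affine_inj_restr_def
    proof (rule exI[of _ c'], rule exI[of _ L'], rule exI[of _ Z'], intro conjI allI impI ballI)
      show "Z' \<subseteq> {1, 2, 3} \<times> UNIV" by (auto simp: Z'_def)
    next
      fix x y :: "nat \<times> nat \<Rightarrow> real"
      assume H: "\<forall>p\<in>{1, 2, 3} \<times> UNIV - Z'.
                c' p + (\<Sum>q\<in>tri (n + 1). L' p q * x q) = c' p + (\<Sum>q\<in>tri (n + 1). L' p q * y q)"
      have "\<forall>q\<in>tri (Suc n). x q = y q"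
      proof (rule kp_inj[OF n3])
        fix l q assume l: "l \<in> {1,2,n}" and q: "q \<in> tri n"
        define t :: nat where "t = (if l = 1 then 1 else if l = 2 then 2 else 3)"
        have t: "t \<in> {1,2,3}" "lv t = l" using l n3 by (auto simp: t_def lv_def)
        have "\<forall>q\<in>tri n. kp l x q = kp l y q"
        proof (rule inj, intro ballI)
          fix p assume p: "p \<in> UNIV - Z"
          then have "(t,p) \<in> {1, 2, 3} \<times> UNIV - Z'" using t by (auto simp: Z'_def)
          then have "c' (t,p) + (\<Sum>q\<in>tri (n + 1). L' (t,p) q * x q) = c' (t,p) + (\<Sum>q\<in>tri (n + 1). L' (t,p) q * y q)"
            using H by blast
          then show "c p + (\<Sum>q\<in>tri n. L p q * kp l x q) = c p + (\<Sum>q\<in>tri n. L p q * kp l y q)"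
            unfolding lin t(2) by (simp add: c'_def)
        qed
        then show "kp l x q = kp l y q" using q by blast
      qed
      moreover fix q assume "q \<in> tri (n + 1)"
      ultimately show "x q = y q" by simp
    next
      fix k :: "nat \<times> nat \<Rightarrow> nat" and p :: "nat \<times> 'n \<times> 'n" assume p: "p \<in> {1, 2, 3} \<times> (UNIV :: ('n \<times> 'n) set)"
      then obtain t r s where trs: "p = (t,r,s)" "t \<in> {1,2,3}" by auto
      have "(\<lambda>k (t, r, s). meval (gen_shift g (if t = (1::nat) then 1 else if t = 2 then 2 else n))
                              (chword (n + 1) k) r s) k p = meval (gen_shift g (lv t)) (chword (n + 1) k) r s"
        using trs by (simp add: lv_def)
      also have "\<dots> = meval g (chword n (kp (lv t) k)) r s" using key[OF lv] by simp
      also have "\<dots> = (if (r,s) \<in> Z then NegInf else Fin (c (r,s) + (\<Sum>q\<in>tri n. L (r,s) q * real (kp (lv t) k q))))"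
        by (rule val)
      also have "\<dots> = (if p \<in> Z' then NegInf else Fin (c' p + (\<Sum>q\<in>tri (n + 1). L' p q * real (k q))))"
        using trs lin[of t "(r,s)" "\<lambda>q. real (k q)"] by (auto simp: Z'_def c'_def kp_of_nat)
      finally show "(\<lambda>k (t, r, s). meval (gen_shift g (if t = (1::nat) then 1 else if t = 2 then 2 else n))
                              (chword (n + 1) k) r s) k p =
           (if p \<in> Z' then NegInf else Fin (c' p + (\<Sum>q\<in>tri (n + 1). L' p q * real (k q))))" .
    qed
  qed
  show ?thesis using part1 part2 by blast
qed

end
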